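(* Let $U \subset \mathbb{R}^n$ be an open convex set and let $f \colon U \to \mathbb{R}$ be a convex function. Suppose $(x_k)_{k\ge 0}$ is a BFGS sequence for $f$ contained in $U$, and that the level set $\{x \in U : f(x) \le f(x_0)\}$ is bounded. Assume there is an open set $V \subset U$ containing the closure $\mathrm{cl}\,\{x_k : k\ge 0\}$ and satisfying $\inf_{x \in V} f(x) = \min f$, such that for every constant $\delta > 0$ there exist a convex open set $U_\delta \subset U$ containing $\{x \in U : f(x) \le f(x_0)\}$ and a twice continuously differentiable convex function $f_\delta \colon U_\delta \to \mathbb{R}$ with $f_\delta(x) = f(x)$ for all $x \in U_\delta$ satisfying $d_{V^c}(x) > \delta$. Then the sequence of function values $f(x_k)$ converges to $\min f$.
   Context: Here $\min f$ denotes the minimum (infimum) value of $f$ over $U$; $V^c = \mathbb{R}^n \setminus V$, and $d_{V^c}(x) = \inf_{z \in V^c}\|z - x\|$ is the Euclidean distance from $x$ to $V^c$. A sequence $(x_k)$ is a BFGS sequence for $f$ if $f$ is differentiable at each $x_k$ with $\nabla f(x_k) \neq 0$, and there exist parameters $0<\mu<\nu<1$ and a positive definite $n\times n$ matrix $H_0$ such that, with $s_k = x_{k+1}-x_k$, $y_k = \nabla f(x_{k+1}) - \nabla f(x_k)$, $V_k = I - \frac{s_k y_k^T}{s_k^T y_k}$ and $H_{k+1} = V_k H_k V_k^T + \frac{s_k s_k^T}{s_k^T y_k}$, one has for all $k=0,1,2,\dots$: $H_k \nabla f(x_k) \in -\mathbb{R}_+ s_k$, $f(x_{k+1}) \le f(x_k)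 + \mu \nabla f(x_k)^T s_k$, and $\nabla f(x_{k+1})^T s_k \ge \nu \nabla f(x_k)^T s_k$. *)

theory Defs
  imports "HOL-Analysis.Analysis"
begin

definition outer :: "real^'n \<Rightarrow> real^'n \<Rightarrow> real^'n^'n" where
  "outer u v = (\<chi> i j. u $ i * v $ j)"

definition pos_def_mat :: "real^'n^'n \<Rightarrow> bool" where
  "pos_def_mat H \<longleftrightarrow> transpose H = H \<and> (\<forall>v. v \<noteq> 0 \<longrightarrow> v \<bullet> (H *v v) > 0)"

primrec bfgs_H :: "(nat \<Rightarrow> real^'n) \<Rightarrow> (nat \<Rightarrow> real^'n) \<Rightarrow> real^'n^'n \<Rightarrow> nat \<Rightarrow> real^'n^'n" where
  "bfgs_H x g H0 0 = H0"
| "bfgs_H x g H0 (Suc k) =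
     (let s = x (Suc k) - x k; y = g (Suc k) - g k;
          V = mat 1 - (1 / (s \<bullet> y)) *\<^sub>R outer s y
      in V ** bfgs_H x g H0 k ** transpose V + (1 / (s \<bullet> y)) *\<^sub>R outer s s)"

definition bfgs_seq :: "(real^'n \<Rightarrow> real) \<Rightarrow> (nat \<Rightarrow> real^'n) \<Rightarrow> bool" where
  "bfgs_seq f x \<longleftrightarrow>
    (\<exists>g :: nat \<Rightarrow> real^'n. \<exists>\<mu> \<nu> :: real. \<exists>H0 :: real^'n^'n.
       (\<forall>k. (f has_derivative (\<lambda>h. g k \<bullet> h)) (at (x k)) \<and> g k \<noteq> 0) \<and>
       0 < \<mu> \<and> \<mu> < \<nu> \<and> \<nu> < 1 \<and> pos_def_mat H0 \<and>
       (\<forall>k. let s = x (Suc k) - x k in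
            (\<exists>t::real. t \<ge> 0 \<and> bfgs_H x g H0 k *v g k = - (t *\<^sub>R s)) \<and>
            f (x (Suc k)) \<le> f (x k) + \<mu> * (g k \<bullet> s) \<and>
            g (Suc k) \<bullet> s \<ge> \<nu> * (g k \<bullet> s)))"

definition C2_on :: "(real^'n) set \<Rightarrow> (real^'n \<Rightarrow> real) \<Rightarrow> bool" where
  "C2_on S F \<longleftrightarrow>
    (\<exists>D :: real^'n \<Rightarrow> ((real^'n) \<Rightarrow>\<^sub>L real). \<exists>D2 :: real^'n \<Rightarrow> ((real^'n) \<Rightarrow>\<^sub>L ((real^'n) \<Rightarrow>\<^sub>L real)).
       (\<forall>x\<in>S. (F has_derivative blinfun_apply (D x)) (at x)) \<and>
       (\<forall>x\<in>S. (D has_derivative blinfun_apply (D2 x)) (at x)) \<and>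
       continuous_on S D2)"

end

theory Submission
  imports Defs
begin


lemma row_mat1: "row i (mat 1 :: real^'n^'n) = axis i 1"
  by (simp add: row_def mat_def axis_def vec_eq_iff)

lemma sum_axis: "(\<Sum>i\<in>UNIV. (x::real^'n) $ i *s axis i 1) = x"
proof -
  have "\<And>j. (\<Sum>i\<in>UNIV. x $ i * (if j = i then 1 else 0)) = x $ j"
  proof -
    fix j
    have "(\<Sum>i\<in>UNIV. x $ i * (if j = i then 1 else 0)) = (\<Sum>i\<in>UNIV. (if j = i then x $ i else 0))"
      by (rule sum.cong) auto
    then show "(\<Sum>i\<in>UNIV. x $ i * (if j = i then 1 else 0)) = x $ j" by simp
  qed
  then show ?thesis by (simp add: vec_eq_iff sum_component axis_def)
qed

lemma det_replace_row: "det (\<chi> i. if i = k then w else axis i 1 :: real^'n^'n) = w $ k"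
proof -
  have "det ((\<chi> i. if i = k then sum (\<lambda>i. w$i *s row i (mat 1 :: real^'n^'n)) (UNIV::'n set)
                             else row i (mat 1 :: real^'n^'n))) = w$k * det (mat 1 :: real^'n^'n)"
    by (rule cramer_lemma_transpose)
  then show ?thesis unfolding row_mat1 sum_axis by simp
qed

lemma outer_mv: "outer u v *v z = (v \<bullet> z) *\<^sub>R u"
  by (simp add: outer_def matrix_vector_mult_def vec_eq_iff inner_vec_def sum_distrib_left mult_ac)

lemma transpose_outer: "transpose (outer u v) = outer v u"
  by (simp add: outer_def transpose_def vec_eq_iff)




lemma sum_delta_mult: "(\<Sum>k\<in>(UNIV::'n::finite set). (if k = i then a else 0) * (F k::real)) = a * F i"
proof -
  have "(\<Sum>k\<in>(UNIV::'n set). (if k = i then a else 0) * F k) = (\<Sum>k\<in>UNIV. if k = i then a * F i else 0)"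
    by (rule sum.cong) auto
  then show ?thesis by simp
qed

lemma sum_delta_mult2: "finite T \<Longrightarrow> (\<Sum>x\<in>T. (c x::real) * (if i = x then 1 else 0)) = (if i \<in> T then c i else 0)"
proof -
  assume "finite T"
  have "(\<Sum>x\<in>T. (c x::real) * (if i = x then 1 else 0)) = (\<Sum>x\<in>T. if x = i then c x else 0)"
    by (rule sum.cong) auto
  then show ?thesis using \<open>finite T\<close> by (simp add: sum.delta)
qed

lemma det_rank1_aux:
  fixes u v :: "real^'n"
  shows "det (\<chi> i. if i \<in> T then axis i 1 + u$i *s v else axis i 1 :: real^'n^'n) = 1 + (\<Sum>i\<in>T. u$i * v$i)"
proof -
  have "finite T" by simp
  then show ?thesis
  proof (induction T rule: finite_induct)
    case empty
    have "(\<chi> i. if i \<in> {} then axis i 1 + u$i *s v else axis i 1 :: real^'n^'n) = mat 1"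
      by (simp add: vec_eq_iff mat_def axis_def)
    then show ?case by simp
  next
    case (insert j T)
    define M where "M = (\<chi> i. if i \<in> T then axis i 1 + u$i *s v else axis i 1 :: real^'n^'n)"
    have eq1: "(\<chi> i. if i \<in> insert j T then axis i 1 + u$i *s v else axis i 1 :: real^'n^'n)
        = (\<chi> i. if i = j then axis i 1 + u$i *s v else M$i)"
      by (simp add: M_def vec_eq_iff)
    have eq2: "(\<chi> i. if i = j then axis i 1 else M$i) = M"
      using insert.hyps by (simp add: M_def vec_eq_iff)
    define P where "P = (\<chi> i. if i = j then v else axis i 1 :: real^'n^'n)"
    define E where "E = (\<chi> i. if i \<in> T then axis i 1 + u$i *s axis j 1 else axis i 1 :: real^'n^'n)"
    have tE: "transpose E = (\<chi> i. if i = j then axis j 1 + (\<Sum>k\<in>T. u$k *s axis k 1) else axis i 1)"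
      using insert.hyps
      by (auto simp: E_def transpose_def vec_eq_iff axis_def sum_component sum_delta_mult2)
    have "det E = 1"
    proof -
      have "det E = det (transpose E)" by simp
      also have "\<dots> = (axis j 1 + (\<Sum>k\<in>T. u$k *s axis k (1::real)))$j"
        unfolding tE by (rule det_replace_row)
      also have "\<dots> = 1" using insert.hyps
        by (auto simp: sum_component axis_def intro!: sum.neutral)
      finally show ?thesis .
    qed
    have "det P = v$j" unfolding P_def by (rule det_replace_row)
    have EP: "E ** P = (\<chi> i. if i = j then v else M$i)"
    proof -
      have "(E ** P)$i$c = (\<chi> i. if i = j then v else M$i)$i$c" for i c
      proof (cases "i \<in> T")
        case True
        then have "i \<noteq> j" using insert.hyps by auto
        have "(E ** P)$i$c = (\<Sum>k\<in>UNIV. ((if k = i then 1 else 0) + (if k = j then u$i else 0)) * P$k$c)"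
          using True by (auto simp: matrix_matrix_mult_def E_def axis_def intro!: sum.cong)
        also have "\<dots> = P$i$c + u$i * P$j$c"
          by (simp add: distrib_right sum.distrib sum_delta_mult)
        finally show ?thesis using True \<open>i \<noteq> j\<close> by (simp add: P_def M_def)
      next
        case False
        have "(E ** P)$i$c = (\<Sum>k\<in>UNIV. (if k = i then 1 else 0) * P$k$c)"
          using False by (simp add: matrix_matrix_mult_def E_def axis_def)
        also have "\<dots> = P$i$c"
          by (simp add: sum_delta_mult)
        finally show ?thesis using False by (simp add: P_def M_def)
      qed
      then show ?thesis by (simp add: vec_eq_iff)
    qed
    have "det (\<chi> i. if i = j then axis i 1 + u$i *s v else M$i)
        = det (\<chi> i. if i = j then axis i 1 else M$i) + det (\<chi> i. if i = j then u$i *s v else M$i)"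
      by (rule det_row_add)
    also have "det (\<chi> i. if i = j then u$i *s v else M$i) = u$j * det (\<chi> i. if i = j then v else M$i)"
    proof -
      have "(\<chi> i. if i = j then u$i *s v else M$i) = (\<chi> i. if i = j then u$j *s v else M$i)"
        by (simp add: vec_eq_iff)
      then show ?thesis using det_row_mul[of j "u$j" "\<lambda>_. v" "\<lambda>i. M$i"] by simp
    qed
    also have "det (\<chi> i. if i = j then v else M$i) = v$j"
      using EP det_mul[of E P] \<open>det E = 1\<close> \<open>det P = v$j\<close> by simp
    finally have X: "det (\<chi> i. if i = j then axis i 1 + u$i *s v else M$i) = det M + u$j * v$j"
      unfolding eq2 .
    have "det M = 1 + (\<Sum>i\<in>T. u$i * v$i)" using insert.IH by (simp add: M_def)
    then show ?case using X insert.hyps unfolding eq1 by simp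
  qed
qed

lemma det_rank1: "det (mat 1 + outer u v :: real^'n^'n) = 1 + v \<bullet> u"
proof -
  have "mat 1 + outer u v = (\<chi> i. if i \<in> UNIV then axis i 1 + u$i *s v else axis i 1 :: real^'n^'n)"
    by (simp add: vec_eq_iff mat_def axis_def outer_def)
  then show ?thesis using det_rank1_aux[of UNIV u v]
    by (simp add: inner_vec_def mult.commute)
qed




lemma mv_diff: "((A::real^'n^'m) - B) *v z = A *v z - B *v z"
  by (simp add: matrix_vector_mult_def vec_eq_iff sum_subtractf left_diff_distrib)
lemma mv_add: "((A::real^'n^'m) + B) *v z = A *v z + B *v z"
  by (simp add: matrix_vector_mult_def vec_eq_iff sum.distrib distrib_right)
lemma mv_scale: "(c *\<^sub>R (A::real^'n^'m)) *v z = c *\<^sub>R (A *v z)"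
  by (simp add: matrix_vector_mult_def vec_eq_iff sum_distrib_left mult_ac)
lemma inner_transpose: "(x::real^'m) \<bullet> ((A::real^'n^'m) *v y) = (transpose A *v x) \<bullet> y"
  apply (simp add: inner_vec_def matrix_vector_mult_def transpose_def sum_distrib_left sum_distrib_right)
  apply (subst sum.swap) apply (simp add: mult_ac)
  done
lemma sym_inner: "transpose A = A \<Longrightarrow> (x::real^'n) \<bullet> ((A::real^'n^'n) *v y) = (A *v x) \<bullet> y"
  by (metis inner_transpose)
lemma transpose_add: "transpose ((A::real^'n^'m) + B) = transpose A + transpose B"
  by (simp add: transpose_def vec_eq_iff)
lemma transpose_diff: "transpose ((A::real^'n^'m) - B) = transpose A - transpose B"
  by (simp add: transpose_def vec_eq_iff)
lemma trace_scale: "trace (c *\<^sub>R (A::real^'n^'n)) = c * trace A"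
  by (simp add: trace_def sum_distrib_left)
lemma trace_outer: "trace (outer u v) = u \<bullet> v"
  by (simp add: trace_def outer_def inner_vec_def)



declare transpose_matrix_vector[simp del]

lemma pd_pos: "pos_def_mat H \<Longrightarrow> z \<noteq> 0 \<Longrightarrow> z \<bullet> (H *v z) > 0"
  by (simp add: pos_def_mat_def)
lemma pd_nonneg: "pos_def_mat H \<Longrightarrow> z \<bullet> (H *v z) \<ge> 0"
  by (cases "z = 0") (auto simp: pos_def_mat_def intro: less_imp_le)
lemma pd_sym: "pos_def_mat H \<Longrightarrow> transpose H = H"
  by (simp add: pos_def_mat_def)

lemma bfgs_step:
  fixes H B :: "real^'n^'n" and s y :: "real^'n"
  assumes pd: "pos_def_mat H" and Bsym: "transpose B = B" and BH: "B ** H = mat 1" and sy: "s \<bullet> y > 0"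
    and V_def: "V = mat 1 - (1 / (s \<bullet> y)) *\<^sub>R outer s y"
    and H'_def: "H' = V ** H ** transpose V + (1 / (s \<bullet> y)) *\<^sub>R outer s s"
    and a_def: "a = B *v s"
    and B'_def: "B' = B - (1 / (s \<bullet> a)) *\<^sub>R outer a a + (1 / (y \<bullet> s)) *\<^sub>R outer y y"
  shows "s \<bullet> a > 0" and "pos_def_mat H'" and "transpose B' = B'" and "B' ** H' = mat 1"
    and "trace B' = trace B - (a \<bullet> a) / (s \<bullet> a) + (y \<bullet> y) / (y \<bullet> s)"
    and "det B' = det B * ((y \<bullet> s) / (s \<bullet> a))"
proof -
  have Hsym: "transpose H = H" using pd by (simp add: pos_def_mat_def)
  have HB: "H ** B = mat 1" using BH matrix_left_right_inverse by blast
  have BHv: "B *v (H *v w) = w" for w by (simp add: matrix_vector_mul_assoc BH)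
  have HBv: "H *v (B *v w) = w" for w by (simp add: matrix_vector_mul_assoc HB)
  have Ha: "H *v a = s" by (simp add: a_def HBv)
  have Hs: "u \<bullet> (H *v w) = (H *v u) \<bullet> w" for u w by (rule sym_inner[OF Hsym])
  have Bs: "u \<bullet> (B *v w) = (B *v u) \<bullet> w" for u w by (rule sym_inner[OF Bsym])
  have s0: "s \<noteq> 0" using sy by auto
  have a0: "a \<noteq> 0" using Ha s0 by auto
  have sa: "s \<bullet> a = a \<bullet> (H *v a)" using Ha by (simp add: inner_commute)
  show sapos: "s \<bullet> a > 0" unfolding sa using pd_pos[OF pd a0] .
  define \<rho> where "\<rho> = 1 / (s \<bullet> y)"
  have \<rho>sy: "\<rho> * (s \<bullet> y) = 1" using sy by (simp add: \<rho>_def)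
  have tV: "transpose V = mat 1 - \<rho> *\<^sub>R outer y s"
    by (simp add: V_def \<rho>_def transpose_diff transpose_scalar transpose_outer)
  have Vv: "V *v w = w - (\<rho> * (y \<bullet> w)) *\<^sub>R s" for w
    by (simp add: V_def \<rho>_def mv_diff mv_scale outer_mv)
  have tVv: "transpose V *v w = w - (\<rho> * (s \<bullet> w)) *\<^sub>R y" for w
    by (simp add: tV mv_diff mv_scale outer_mv)
  have H'v: "H' *v z = V *v (H *v (transpose V *v z)) + (\<rho> * (s \<bullet> z)) *\<^sub>R s" for z
    by (simp add: H'_def \<rho>_def mv_add mv_scale outer_mv matrix_vector_mul_assoc[symmetric])
  have quad: "z \<bullet> (H' *v z) = p \<bullet> (H *v p) + \<rho> * (s \<bullet> z)^2" if "p = transpose V *v z" for z p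
  proof -
    have "z \<bullet> (H' *v z) = z \<bullet> (V *v (H *v p)) + \<rho> * (s \<bullet> z) * (z \<bullet> s)"
      using that by (simp add: H'v inner_add_right)
    also have "z \<bullet> (V *v (H *v p)) = p \<bullet> (H *v p)"
      using that by (simp add: inner_transpose)
    finally show ?thesis by (simp add: power2_eq_square inner_commute)
  qed
  have \<rho>pos: "\<rho> > 0" using sy by (simp add: \<rho>_def)
  show "pos_def_mat H'"
    unfolding pos_def_mat_def
  proof (intro conjI allI impI)
    show "transpose H' = H'"
      by (simp add: H'_def transpose_add transpose_scalar transpose_outer matrix_transpose_mul Hsym matrix_mul_assoc)
    fix z :: "real^'n" assume z0: "z \<noteq> 0"
    define p where "p = transpose V *v z"
    have q: "z \<bullet> (H' *v z) = p \<bullet> (H *v p) + \<rho> * (s \<bullet> z)^2" using quad p_def by blast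
    show "z \<bullet> (H' *v z) > 0"
    proof (cases "s \<bullet> z = 0")
      case True
      then have "p = z" unfolding p_def tVv by simp
      then show ?thesis using q True pd_pos[OF pd z0] by simp
    next
      case False
      then have "\<rho> * (s \<bullet> z)^2 > 0" using \<rho>pos by simp
      then show ?thesis using q pd_nonneg[OF pd, of p] by linarith
    qed
  qed
  show "transpose B' = B'"
    by (simp add: B'_def transpose_add transpose_diff transpose_scalar transpose_outer Bsym)
  have B'v: "B' *v w = B *v w - ((a \<bullet> w) / (s \<bullet> a)) *\<^sub>R a + ((y \<bullet> w) / (y \<bullet> s)) *\<^sub>R y" for w
    by (simp add: B'_def mv_add mv_diff mv_scale outer_mv)
  have "(B' ** H') *v z = z" for z
  proof -
    define p where "p = z - (\<rho> * (s \<bullet> z)) *\<^sub>R y"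
    define hp where "hp = H *v p"
    define w where "w = H' *v z"
    have w: "w = hp - (\<rho> * (y \<bullet> hp)) *\<^sub>R s + (\<rho> * (s \<bullet> z)) *\<^sub>R s"
      by (simp add: w_def H'v tVv Vv p_def hp_def)
    have Bw: "B *v w = p - (\<rho> * (y \<bullet> hp)) *\<^sub>R a + (\<rho> * (s \<bullet> z)) *\<^sub>R a"
      by (simp add: w hp_def BHv a_def matrix_vector_mult_diff_distrib matrix_vector_right_distrib
          matrix_vector_mult_scaleR)
    have sp: "s \<bullet> p = 0" using \<rho>sy by (simp add: p_def inner_diff_right algebra_simps inner_commute)
    have ahp: "a \<bullet> hp = 0" using sp Hs[of a p] Ha by (simp add: hp_def)
    have aw: "a \<bullet> w = (s \<bullet> a) * (\<rho> * (s \<bullet> z) - \<rho> * (y \<bullet> hp))"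
      by (simp add: w inner_add_right inner_diff_right ahp algebra_simps inner_commute)
    have yw: "y \<bullet> w = s \<bullet> z"
    proof -
      have "y \<bullet> w = y \<bullet> hp - (\<rho> * (s \<bullet> y)) * (y \<bullet> hp) + (\<rho> * (s \<bullet> y)) * (s \<bullet> z)"
        by (simp add: w inner_add_right inner_diff_right algebra_simps inner_commute)
      then show ?thesis using \<rho>sy by simp
    qed
    have "(B' ** H') *v z = B' *v w" by (simp add: w_def matrix_vector_mul_assoc)
    also have "\<dots> = p + (\<rho> * (s \<bullet> z)) *\<^sub>R y"
    proof -
      have aw': "(a \<bullet> w) / (s \<bullet> a) = \<rho> * (s \<bullet> z) - \<rho> * (y \<bullet> hp)"
        using sapos unfolding aw by simp
      have yw': "(y \<bullet> w) / (y \<bullet> s) = \<rho> * (s \<bullet> z)"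
        using yw by (simp add: \<rho>_def inner_commute)
      show ?thesis unfolding B'v Bw aw' yw' by (simp add: scaleR_diff_left algebra_simps)
    qed
    also have "\<dots> = z" by (simp add: p_def)
    finally show ?thesis .
  qed
  then show "B' ** H' = mat 1" by (simp add: matrix_eq)
  show "trace B' = trace B - (a \<bullet> a) / (s \<bullet> a) + (y \<bullet> y) / (y \<bullet> s)"
    by (simp add: B'_def trace_add trace_sub trace_scale trace_outer)
  define \<theta> where "\<theta> = (y \<bullet> (H *v y)) / (y \<bullet> s)"
  have \<theta>0: "\<theta> \<ge> 0" using pd_nonneg[OF pd, of y] sy by (simp add: \<theta>_def inner_commute)
  define c where "c = 1 / (1 + \<theta>)"
  have c1: "c * (1 + \<theta>) = 1" using \<theta>0 by (simp add: c_def)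
  define x1 where "x1 = (- 1 / (s \<bullet> a)) *\<^sub>R s"
  define w1 where "w1 = a - c *\<^sub>R y"
  define x2 where "x2 = (1 / (y \<bullet> s)) *\<^sub>R (H *v y)"
  have ys: "y \<bullet> s > 0" using sy by (simp add: inner_commute)
  have w1x2: "w1 \<bullet> x2 = c"
  proof -
    have aHy: "a \<bullet> (H *v y) = y \<bullet> s" using Hs[of a y] Ha by (simp add: inner_commute)
    have "w1 \<bullet> x2 = (a \<bullet> (H *v y) - c * (y \<bullet> (H *v y))) / (y \<bullet> s)"
      by (simp add: w1_def x2_def inner_diff_left inner_scaleR_left inner_scaleR_right diff_divide_distrib)
    also have "\<dots> = 1 - c * \<theta>" using ys by (simp add: aHy \<theta>_def diff_divide_distrib)
    also have "\<dots> = c" using c1 by (simp add: algebra_simps)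
    finally show ?thesis .
  qed
  have fact: "B' = B ** (mat 1 + outer x1 w1) ** (mat 1 + outer x2 y)"
  proof -
    have "B' *v z = (B ** (mat 1 + outer x1 w1) ** (mat 1 + outer x2 y)) *v z" for z
    proof -
      define z2 where "z2 = z + (y \<bullet> z) *\<^sub>R x2"
      have w1z2: "w1 \<bullet> z2 = a \<bullet> z"
      proof -
        have "w1 \<bullet> z2 = w1 \<bullet> z + (y \<bullet> z) * (w1 \<bullet> x2)" by (simp add: z2_def inner_add_right)
        also have "\<dots> = (a \<bullet> z - c * (y \<bullet> z)) + (y \<bullet> z) * c"
          unfolding w1x2 by (simp add: w1_def inner_diff_left)
        finally show ?thesis by simp
      qed
      have "(B ** (mat 1 + outer x1 w1) ** (mat 1 + outer x2 y)) *v z = B *v (z2 + (w1 \<bullet> z2) *\<^sub>R x1)"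
        by (simp add: matrix_vector_mul_assoc[symmetric] mv_add outer_mv z2_def)
      also have "\<dots> = B *v z + ((y \<bullet> z) / (y \<bullet> s)) *\<^sub>R y - ((a \<bullet> z) / (s \<bullet> a)) *\<^sub>R a"
        unfolding w1z2
        by (simp add: z2_def x1_def x2_def BHv matrix_vector_right_distrib matrix_vector_mult_scaleR
            a_def[symmetric] algebra_simps)
      finally show ?thesis by (simp add: B'v)
    qed
    then show ?thesis by (simp add: matrix_eq)
  qed
  have "det B' = det B * (1 + w1 \<bullet> x1) * (1 + y \<bullet> x2)"
    unfolding fact by (simp add: det_mul det_rank1)
  also have "1 + w1 \<bullet> x1 = c * (y \<bullet> s) / (s \<bullet> a)"
    using sapos by (simp add: w1_def x1_def inner_diff_left inner_diff_right field_simps inner_commute)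
  also have "1 + y \<bullet> x2 = 1 + \<theta>"
    by (simp add: x2_def \<theta>_def)
  finally have "det B' = det B * (c * (y \<bullet> s) / (s \<bullet> a)) * (1 + \<theta>)" .
  moreover have "det B * (c * (y \<bullet> s) / (s \<bullet> a)) * (1 + \<theta>) = det B * ((y \<bullet> s) / (s \<bullet> a)) * (c * (1 + \<theta>))"
    by (simp add: algebra_simps)
  ultimately show "det B' = det B * ((y \<bullet> s) / (s \<bullet> a))"
    using c1 by simp
qed




lemma entry_inner: "axis i 1 \<bullet> ((A::real^'n^'n) *v axis j 1) = A$i$j"
proof -
  have "(\<Sum>k\<in>UNIV. A $ i' $ k * (if k = j then 1 else 0)) = A$i'$j" for i'
  proof -
    have "(\<Sum>k\<in>UNIV. A $ i' $ k * (if k = j then 1 else 0)) = (\<Sum>k\<in>UNIV. if k = j then A$i'$k else 0)"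
      by (rule sum.cong) auto
    then show ?thesis by simp
  qed
  then have "A *v axis j 1 = column j A"
    by (simp add: matrix_vector_mult_def axis_def column_def vec_eq_iff)
  then show ?thesis by (simp add: column_def) (metis cart_eq_inner_axis inner_commute vec_lambda_beta)
qed

lemma psd_entry_bound:
  fixes A :: "real^'n^'n"
  assumes sym: "transpose A = A" and psd: "\<And>z. z \<bullet> (A *v z) \<ge> 0"
  shows "\<bar>A$i$j\<bar> \<le> trace A"
proof -
  have diag: "A$k$k \<ge> 0" for k using psd[of "axis k 1"] entry_inner[of k A k] by simp
  have symm: "A$j$i = A$i$j" using sym by (metis transpose_def vec_lambda_beta)
  have tr: "A$k$k \<le> trace A" for k
    unfolding trace_def by (rule member_le_sum) (auto intro: diag)
  show ?thesis
  proof (cases "i = j")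
    case True then show ?thesis using tr diag by simp
  next
    case False
    have ex: "(axis i 1 + c *\<^sub>R axis j 1) \<bullet> (A *v (axis i 1 + c *\<^sub>R axis j 1)) = A$i$i + c * A$i$j + c * A$j$i + c*c * A$j$j" for c
      by (simp add: matrix_vector_right_distrib matrix_vector_mult_scaleR inner_add_left inner_add_right
          entry_inner algebra_simps)
    have p: "0 \<le> A$i$i + 2 * A$i$j + A$j$j" using psd[of "axis i 1 + 1 *\<^sub>R axis j 1"] ex[of 1] symm by simp
    have m: "0 \<le> A$i$i - 2 * A$i$j + A$j$j" using psd[of "axis i 1 + (-1) *\<^sub>R axis j 1"] ex[of "-1"] symm by simp
    have "A$i$i + A$j$j = (\<Sum>k\<in>{i,j}. A$k$k)" using False by simp
    also have "\<dots> \<le> trace A" unfolding trace_def by (rule sum_mono2) (auto intro: diag)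
    finally show ?thesis using p m by linarith
  qed
qed

lemma psd_det_bound:
  fixes A :: "real^'n^'n"
  assumes sym: "transpose A = A" and psd: "\<And>z. z \<bullet> (A *v z) \<ge> 0"
  shows "\<bar>det A\<bar> \<le> real (card {p. p permutes (UNIV::'n set)}) * trace A ^ CARD('n)"
proof -
  have "\<bar>det A\<bar> \<le> (\<Sum>p\<in>{p. p permutes (UNIV::'n set)}. \<bar>of_int (sign p) * prod (\<lambda>i. A$i$p i) UNIV\<bar>)"
    unfolding det_def by (rule sum_abs)
  also have "\<dots> \<le> (\<Sum>p\<in>{p. p permutes (UNIV::'n set)}. trace A ^ CARD('n))"
  proof (rule sum_mono)
    fix p :: "'n \<Rightarrow> 'n"
    have "\<bar>of_int (sign p) * prod (\<lambda>i. A$i$p i) UNIV\<bar> = prod (\<lambda>i. \<bar>A$i$p i\<bar>) UNIV"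
    proof -
      have "\<bar>real_of_int (sign p)\<bar> = 1" by (metis abs_sign of_int_1 of_int_abs)
      then show ?thesis by (simp add: abs_mult abs_prod)
    qed
    also have "\<dots> \<le> prod (\<lambda>i. trace A) (UNIV::'n set)"
      by (rule prod_mono) (auto intro: psd_entry_bound[OF sym psd])
    finally show "\<bar>of_int (sign p) * prod (\<lambda>i. A$i$p i) UNIV\<bar> \<le> trace A ^ CARD('n)" by simp
  qed
  also have "\<dots> = real (card {p. p permutes (UNIV::'n set)}) * trace A ^ CARD('n)" by simp
  finally show ?thesis .
qed




lemma ln_sum_jensen:
  fixes a :: "nat \<Rightarrow> real"
  assumes "m > 0" and pos: "\<And>j. a j > 0"
  shows "(\<Sum>j<m. ln (a j)) \<le> real m * ln ((\<Sum>j<m. a j) / real m)"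
proof -
  define S where "S = (\<Sum>j<m. a j)"
  have S0: "S > 0" unfolding S_def using assms by (intro sum_pos) (auto simp: lessThan_empty_iff)
  define \<mu> where "\<mu> = S / real m"
  have \<mu>0: "\<mu> > 0" using S0 assms by (simp add: \<mu>_def)
  have "ln (a j) \<le> ln \<mu> + (a j / \<mu> - 1)" for j
  proof -
    have "ln (a j / \<mu>) \<le> a j / \<mu> - 1" using pos[of j] \<mu>0 by (intro ln_le_minus_one) simp
    then show ?thesis using pos[of j] \<mu>0 by (simp add: ln_div)
  qed
  then have "(\<Sum>j<m. ln (a j)) \<le> (\<Sum>j<m. ln \<mu> + (a j / \<mu> - 1))" by (rule sum_mono)
  also have "\<dots> = real m * ln \<mu> + S / \<mu> - real m"
    by (simp add: sum.distrib sum_subtractf S_def sum_divide_distrib)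
  also have "S / \<mu> = real m" using S0 assms by (simp add: \<mu>_def)
  finally show ?thesis by (simp add: \<mu>_def S_def)
qed

lemma final_contra:
  fixes q d \<rho> T r \<Delta> :: "nat \<Rightarrow> real" and n :: nat
  assumes q0: "\<And>j. q j > 0" and d0: "\<And>j. d j > 0" and \<rho>0: "\<And>j. \<rho> j > 0"
    and c0: "c > 0" and cle: "\<And>j. c \<le> \<rho> j * q j * d j"
    and Trec: "\<And>j. T (Suc j) = T j - q j + r j" and rM: "\<And>j. r j \<le> M" and M0: "M > 0"
    and T0: "\<And>j. T j > 0"
    and \<Delta>b: "\<And>j. \<bar>\<Delta> j\<bar> \<le> N * T j ^ n" and \<Delta>rec: "\<And>j. \<Delta> (Suc j) = \<Delta> j * \<rho> j"
    and \<Delta>00: "\<Delta> 0 \<noteq> 0" and N0: "N > 0"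
    and dsum: "\<And>m. (\<Sum>j<m. d j) \<le> Dd"
  shows False
proof -
  have Tsum: "T m = T 0 - (\<Sum>j<m. q j) + (\<Sum>j<m. r j)" for m
    by (induction m) (simp_all add: Trec)
  have rsum: "(\<Sum>j<m. r j) \<le> real m * M" for m
    using sum_mono[of "{..<m}" r "\<lambda>_. M"] rM by simp
  have qsum: "(\<Sum>j<m. q j) \<le> T 0 + real m * M" for m
    using Tsum[of m] rsum[of m] T0[of m] by linarith
  have Tm: "T m \<le> T 0 + real m * M" for m
  proof -
    have "(\<Sum>j<m. q j) \<ge> 0" using q0 by (intro sum_nonneg) (auto intro: less_imp_le)
    then show ?thesis using Tsum[of m] rsum[of m] by linarith
  qed
  have \<Delta>abs: "\<bar>\<Delta> m\<bar> > 0" for m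
  proof (induction m)
    case (Suc m)
    then show ?case using \<rho>0[of m] by (simp add: \<Delta>rec abs_mult)
  qed (use \<Delta>00 in simp)
  have ln\<Delta>: "ln \<bar>\<Delta> m\<bar> = ln \<bar>\<Delta> 0\<bar> + (\<Sum>j<m. ln (\<rho> j))" for m
  proof (induction m)
    case (Suc m)
    have "ln \<bar>\<Delta> (Suc m)\<bar> = ln \<bar>\<Delta> m\<bar> + ln (\<rho> m)"
      using \<Delta>abs[of m] \<rho>0[of m] by (simp add: \<Delta>rec abs_mult ln_mult)
    then show ?case using Suc by simp
  qed simp
  have ln\<rho>: "ln (\<rho> j) \<ge> ln c - ln (q j) - ln (d j)" for j
  proof -
    have "ln c \<le> ln (\<rho> j * q j * d j)" using cle[of j] c0 by simp
    then show ?thesis using \<rho>0[of j] q0[of j] d0[of j] by (simp add: ln_mult)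
  qed
  define TM where "TM = T 0 + M"
  have TM0: "TM > 0" using T0[of 0] M0 by (simp add: TM_def)
  define Dd' where "Dd' = max Dd 1"
  have Dd'0: "Dd' > 0" by (simp add: Dd'_def)
  define A where "A = ln N + real n * ln TM - ln \<bar>\<Delta> 0\<bar>"
  define C where "C = ln TM + ln Dd' - ln c"
  have key: "(real m - real n) * ln (real m) \<le> A + real m * C" if m1: "m \<ge> 1" for m
  proof -
    have mpos: "real m > 0" using m1 by simp
    have L1: "ln \<bar>\<Delta> m\<bar> \<ge> ln \<bar>\<Delta> 0\<bar> + real m * ln c - (\<Sum>j<m. ln (q j)) - (\<Sum>j<m. ln (d j))"
    proof -
      have "(\<Sum>j<m. ln (\<rho> j)) \<ge> (\<Sum>j<m. ln c - ln (q j) - ln (d j))" by (rule sum_mono) (rule ln\<rho>)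
      moreover have "(\<Sum>j<m. ln c - ln (q j) - ln (d j)) = real m * ln c - (\<Sum>j<m. ln (q j)) - (\<Sum>j<m. ln (d j))"
        by (simp add: sum_subtractf)
      ultimately show ?thesis using ln\<Delta>[of m] by linarith
    qed
    have L2: "(\<Sum>j<m. ln (q j)) \<le> real m * ln TM"
    proof -
      have "(\<Sum>j<m. ln (q j)) \<le> real m * ln ((\<Sum>j<m. q j) / real m)"
        using ln_sum_jensen[of m q] m1 q0 by simp
      also have "\<dots> \<le> real m * ln TM"
      proof -
        have sp: "(\<Sum>j<m. q j) > 0" using m1 q0 by (intro sum_pos) (auto simp: lessThan_empty_iff)
        have "(\<Sum>j<m. q j) / real m \<le> (T 0 + real m * M) / real m"
          using qsum[of m] mpos by (simp add: divide_right_mono)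
        also have "\<dots> = T 0 / real m + M" using mpos by (simp add: field_simps)
        also have "\<dots> \<le> T 0 + M"
          using T0[of 0] m1 by (simp add: divide_le_eq_1 field_simps)
        finally have "(\<Sum>j<m. q j) / real m \<le> TM" by (simp add: TM_def)
        then have "ln ((\<Sum>j<m. q j) / real m) \<le> ln TM" using sp mpos by (intro ln_mono) auto
        then show ?thesis using mpos by simp
      qed
      finally show ?thesis .
    qed
    have L3: "(\<Sum>j<m. ln (d j)) \<le> real m * ln Dd' - real m * ln (real m)"
    proof -
      have "(\<Sum>j<m. ln (d j)) \<le> real m * ln ((\<Sum>j<m. d j) / real m)"
        using ln_sum_jensen[of m d] m1 d0 by simp
      also have "\<dots> \<le> real m * ln (Dd' / real m)"
      proof -
        have sp: "(\<Sum>j<m. d j) > 0" using m1 d0 by (intro sum_pos) (auto simp: lessThan_empty_iff)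
        have "(\<Sum>j<m. d j) \<le> Dd'" using dsum[of m] by (simp add: Dd'_def)
        then have "ln ((\<Sum>j<m. d j) / real m) \<le> ln (Dd' / real m)"
          using sp mpos by (simp add: divide_right_mono)
        then show ?thesis using mpos by simp
      qed
      also have "\<dots> = real m * ln Dd' - real m * ln (real m)"
        using Dd'0 mpos by (simp add: ln_div algebra_simps)
      finally show ?thesis .
    qed
    have L4: "ln \<bar>\<Delta> m\<bar> \<le> ln N + real n * ln TM + real n * ln (real m)"
    proof -
      have Tmpos: "T m > 0" by (rule T0)
      have "ln \<bar>\<Delta> m\<bar> \<le> ln (N * T m ^ n)" using \<Delta>b[of m] \<Delta>abs[of m] by simp
      also have "\<dots> = ln N + real n * ln (T m)" using N0 Tmpos by (simp add: ln_mult ln_realpow)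
      also have "ln (T m) \<le> ln (TM * real m)"
      proof -
        have "T 0 + real m * M \<le> TM * real m" using m1 T0[of 0] M0
          by (simp add: TM_def algebra_simps)
        then show ?thesis using Tm[of m] Tmpos by simp
      qed
      then have "real n * ln (T m) \<le> real n * ln (TM * real m)" by (simp add: mult_left_mono)
      also have "ln (TM * real m) = ln TM + ln (real m)" using TM0 mpos by (simp add: ln_mult)
      finally show ?thesis by (simp add: algebra_simps)
    qed
    show ?thesis using L1 L2 L3 L4 unfolding A_def C_def by (simp add: algebra_simps)
  qed
  define E where "E = 2 * \<bar>A\<bar> + 2 * \<bar>C\<bar> + 1"
  define m where "m = nat (ceiling (exp E)) + 2 * n + 1"
  have m1: "m \<ge> 1" by (simp add: m_def)
  have mE: "real m \<ge> exp E" unfolding m_def by linarith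
  have lnm: "ln (real m) \<ge> E"
    using mE by (metis exp_gt_zero ln_exp ln_le_cancel_iff order_less_le_trans)
  have "real_of_int (ceiling (exp E)) \<ge> 0" using exp_gt_zero[of E] by linarith
  then have mn: "real m - real n \<ge> real m / 2" unfolding m_def by simp
  have E0: "E > 0" unfolding E_def by simp
  have "real m / 2 * E \<le> (real m - real n) * ln (real m)"
    using mn lnm E0 by (intro mult_mono) auto
  also have "\<dots> \<le> A + real m * C" by (rule key[OF m1])
  finally have "real m / 2 * E \<le> A + real m * C" .
  moreover have "real m / 2 * E = real m * \<bar>A\<bar> + real m * \<bar>C\<bar> + real m / 2"
    by (simp add: E_def algebra_simps)
  moreover have "real m * \<bar>A\<bar> \<ge> \<bar>A\<bar>" using m1 by (simp add: mult_le_cancel_right1)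
  moreover have "real m * C \<le> real m * \<bar>C\<bar>" by (simp add: mult_left_mono)
  moreover have "real m / 2 > 0" using m1 by simp
  ultimately show False by linarith
qed




lemma line_deriv:
  fixes F :: "'a::real_normed_vector \<Rightarrow> real"
  assumes "(F has_derivative blinfun_apply D) (at (z + t *\<^sub>R h))"
  shows "((\<lambda>t. F (z + t *\<^sub>R h)) has_real_derivative (blinfun_apply D h)) (at t)"
proof -
  have l: "((\<lambda>t. z + t *\<^sub>R h) has_derivative (\<lambda>t. t *\<^sub>R h)) (at t)"
    by (auto intro!: derivative_eq_intros)
  have "((\<lambda>t. F (z + t *\<^sub>R h)) has_derivative (\<lambda>t. blinfun_apply D (t *\<^sub>R h))) (at t)"
    using has_derivative_compose[OF l assms] by simp
  moreover have "(\<lambda>t. blinfun_apply D (t *\<^sub>R h)) = (*) (blinfun_apply D h)"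
    by (auto simp: blinfun.scaleR_right)
  ultimately show ?thesis by (simp add: has_field_derivative_def)
qed

lemma above_tangent:
  fixes F :: "'a::real_normed_vector \<Rightarrow> real"
  assumes cvx: "convex_on S F" and S: "convex S" and p: "p \<in> S" and w: "w \<in> S"
    and der: "(F has_derivative blinfun_apply D) (at p)"
  shows "F p + blinfun_apply D (w - p) \<le> F w"
proof -
  define h where "h = w - p"
  have d: "((\<lambda>t. F (p + t *\<^sub>R h)) has_real_derivative (blinfun_apply D h)) (at 0)"
    using line_deriv[of F D p 0 h] der by simp
  then have "((\<lambda>t. F (p + t *\<^sub>R h)) has_real_derivative (blinfun_apply D h)) (at 0 within {0<..})"
    by (rule has_field_derivative_at_within)
  then have "((\<lambda>t. (F (p + t *\<^sub>R h) - F (p + 0 *\<^sub>R h)) / (t - 0)) \<longlongrightarrow> blinfun_apply D h) (at_right 0)"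
    unfolding has_field_derivative_iff .
  then have lim: "((\<lambda>t. (F (p + t *\<^sub>R h) - F p) / t) \<longlongrightarrow> blinfun_apply D h) (at_right 0)" by simp
  have ev: "eventually (\<lambda>t. (F (p + t *\<^sub>R h) - F p) / t \<le> F w - F p) (at_right 0)"
  proof -
    have "eventually (\<lambda>t. t \<in> {0<..<1}) (at_right (0::real))"
      by (rule eventually_at_right_real) simp
    then show ?thesis
    proof (rule eventually_mono)
      fix t :: real assume t: "t \<in> {0<..<1}"
      have "p + t *\<^sub>R h = (1 - t) *\<^sub>R p + t *\<^sub>R w" by (simp add: h_def algebra_simps)
      then have "F (p + t *\<^sub>R h) \<le> (1 - t) * F p + t * F w"
        using convex_onD[OF cvx, of t p w] t p w by simp
      then have "F (p + t *\<^sub>R h) - F p \<le> t * (F w - F p)" by (simp add: algebra_simps)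
      then show "(F (p + t *\<^sub>R h) - F p) / t \<le> F w - F p" using t by (simp add: divide_le_eq mult.commute)
    qed
  qed
  have "blinfun_apply D h \<le> F w - F p"
    by (rule tendsto_upperbound[OF lim ev]) simp
  then show ?thesis by (simp add: h_def)
qed

lemma descent:
  fixes F :: "'a::real_normed_vector \<Rightarrow> real"
  assumes S: "convex S" and der: "\<And>p. p \<in> S \<Longrightarrow> (F has_derivative blinfun_apply (DF p)) (at p)"
    and lip: "\<And>p q. p \<in> S \<Longrightarrow> q \<in> S \<Longrightarrow> norm (DF p - DF q) \<le> L * norm (p - q)"
    and z: "z \<in> S" and zh: "z + h \<in> S"
  shows "F (z + h) \<le> F z + blinfun_apply (DF z) h + L / 2 * (norm h)^2"
proof -
  define \<phi> where "\<phi> t = F (z + t *\<^sub>R h) - t * blinfun_apply (DF z) h - L / 2 * t^2 * (norm h)^2" for t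
  have inS: "z + t *\<^sub>R h \<in> S" if "0 \<le> t" "t \<le> 1" for t
  proof -
    have "z + t *\<^sub>R h = (1 - t) *\<^sub>R z + t *\<^sub>R (z + h)" by (simp add: algebra_simps)
    then show ?thesis using convexD[OF S z zh, of "1 - t" t] that by simp
  qed
  have "\<phi> 1 \<le> \<phi> 0"
  proof (rule DERIV_nonpos_imp_nonincreasing[of 0 1 \<phi>])
    fix t :: real assume t: "0 \<le> t" "t \<le> 1"
    have dF: "((\<lambda>t. F (z + t *\<^sub>R h)) has_real_derivative (blinfun_apply (DF (z + t *\<^sub>R h)) h)) (at t)"
      by (rule line_deriv) (rule der[OF inS[OF t]])
    have "(\<phi> has_real_derivative (blinfun_apply (DF (z + t *\<^sub>R h)) h - blinfun_apply (DF z) h - L / 2 * (2 * t) * (norm h)^2)) (at t)"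
      unfolding \<phi>_def
      by (rule dF derivative_eq_intros refl | simp)+
    moreover have "blinfun_apply (DF (z + t *\<^sub>R h)) h - blinfun_apply (DF z) h - L / 2 * (2 * t) * (norm h)^2 \<le> 0"
    proof -
      have "blinfun_apply (DF (z + t *\<^sub>R h)) h - blinfun_apply (DF z) h = blinfun_apply (DF (z + t *\<^sub>R h) - DF z) h"
        by (simp add: blinfun.diff_left)
      also have "\<dots> \<le> norm (DF (z + t *\<^sub>R h) - DF z) * norm h"
        using norm_blinfun[of "DF (z + t *\<^sub>R h) - DF z" h] by simp
      also have "\<dots> \<le> (L * norm (t *\<^sub>R h)) * norm h"
        using lip[OF inS[OF t] z] by (intro mult_right_mono) auto
      also have "\<dots> = L / 2 * (2 * t) * (norm h)^2" using t by (simp add: power2_eq_square)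
      finally show ?thesis by simp
    qed
    ultimately show "\<exists>y. (\<phi> has_real_derivative y) (at t) \<and> y \<le> 0" by blast
  qed simp
  then show ?thesis by (simp add: \<phi>_def)
qed




lemma cocoercive:
  fixes F :: "'a::real_inner \<Rightarrow> real"
  assumes Oc: "convex Om" and Ocv: "convex_on Om F"
    and der: "\<And>p. p \<in> Om \<Longrightarrow> (F has_derivative blinfun_apply (DF p)) (at p)"
    and K'O: "K' \<subseteq> Om" and K'c: "convex K'"
    and lip: "\<And>p q. p \<in> K' \<Longrightarrow> q \<in> K' \<Longrightarrow> norm (DF p - DF q) \<le> L * norm (p - q)" and L: "L > 0"
    and KK': "\<And>k e. k \<in> K \<Longrightarrow> norm e \<le> r \<Longrightarrow> k + e \<in> K'" and r: "r > 0"
    and diam: "\<And>a b. a \<in> K \<Longrightarrow> b \<in> K \<Longrightarrow> norm (a - b) \<le> R2"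
    and x1: "x1 \<in> K" and y1: "y1 \<in> K"
    and v: "\<And>h. blinfun_apply (DF y1 - DF x1) h = v \<bullet> h"
  shows "(norm v)^2 \<le> (L + L * R2 / r) * (v \<bullet> (y1 - x1))"
proof -
  have R2: "R2 \<ge> 0" using diam[OF x1 x1] by simp
  define L' where "L' = L + L * R2 / r"
  have L'pos: "L' > 0" using L r R2 by (simp add: L'_def add_pos_nonneg)
  have LL': "L \<le> L'" using L r R2 by (simp add: L'_def)
  have rL': "L * R2 \<le> r * L'" using r L by (simp add: L'_def field_simps)
  have inK': "k \<in> K'" if "k \<in> K" for k using KK'[OF that, of 0] r by simp
  have half: "F a + blinfun_apply (DF a) (b - a) \<le> F b - (norm u)^2 / (2 * L')"
    if a: "a \<in> K" and b: "b \<in> K" and u: "\<And>h. blinfun_apply (DF b - DF a) h = u \<bullet> h" for a b u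
  proof -
    have "(norm u)^2 = blinfun_apply (DF b - DF a) u" by (simp add: u power2_norm_eq_inner)
    also have "\<dots> \<le> norm (DF b - DF a) * norm u" using norm_blinfun[of "DF b - DF a" u] by simp
    also have "\<dots> \<le> (L * norm (b - a)) * norm u"
      by (intro mult_right_mono lip inK' a b) auto
    finally have "norm u * norm u \<le> (L * norm (b - a)) * norm u" by (simp add: power2_eq_square)
    then have nu: "norm u \<le> L * norm (b - a)"
      using L by (cases "norm u = 0") (auto simp: mult_le_cancel_right)
    have nu2: "norm u \<le> L * R2" using nu diam[OF b a] L by (meson mult_left_mono less_imp_le order_trans)
    define h where "h = - (1 / L') *\<^sub>R u"
    have nh: "norm h \<le> r"
    proof -
      have "norm h = norm u / L'" using L'pos by (simp add: h_def)
      also have "\<dots> \<le> r" using nu2 rL' L'pos by (simp add: divide_le_eq mult.commute)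
      finally show ?thesis .
    qed
    have w: "b + h \<in> K'" by (rule KK'[OF b nh])
    have tang: "F a + blinfun_apply (DF a) ((b + h) - a) \<le> F (b + h)"
      by (rule above_tangent[OF Ocv Oc]) (use K'O w inK' a in \<open>auto intro: der\<close>)
    have desc: "F (b + h) \<le> F b + blinfun_apply (DF b) h + L / 2 * (norm h)^2"
      by (rule descent[OF K'c _ lip inK'[OF b] w]) (use K'O in \<open>auto intro: der\<close>)
    have lin: "blinfun_apply (DF a) ((b + h) - a) = blinfun_apply (DF a) (b - a) + blinfun_apply (DF a) h"
      by (simp add: blinfun.add_right[symmetric] algebra_simps)
    have dh: "blinfun_apply (DF b) h - blinfun_apply (DF a) h = - ((norm u)^2 / L')"
    proof -
      have "blinfun_apply (DF b) h - blinfun_apply (DF a) h = u \<bullet> h" using u[of h] by (simp add: blinfun.diff_left)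
      also have "\<dots> = - ((norm u)^2 / L')" by (simp add: h_def power2_norm_eq_inner)
      finally show ?thesis .
    qed
    have nh2: "L / 2 * (norm h)^2 \<le> (norm u)^2 / (2 * L')"
    proof -
      have "L / 2 * (norm h)^2 = L * (norm u)^2 / (2 * L' * L')" using L'pos
        by (simp add: h_def power2_eq_square field_simps)
      also have "\<dots> \<le> L' * (norm u)^2 / (2 * L' * L')"
        using LL' L'pos by (intro divide_right_mono mult_right_mono) auto
      also have "\<dots> = (norm u)^2 / (2 * L')" using L'pos by (simp add: field_simps power2_eq_square)
      finally show ?thesis .
    qed
    have "(norm u)^2 / L' = 2 * ((norm u)^2 / (2 * L'))" by simp
    then show ?thesis using tang desc lin dh nh2 by linarith
  qed
  have h1: "F x1 + blinfun_apply (DF x1) (y1 - x1) \<le> F y1 - (norm v)^2 / (2 * L')"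
    by (rule half[OF x1 y1 v])
  have h2: "F y1 + blinfun_apply (DF y1) (x1 - y1) \<le> F x1 - (norm (-v))^2 / (2 * L')"
    by (rule half[OF y1 x1]) (metis v blinfun.minus_left minus_diff_eq inner_minus_left)
  have "blinfun_apply (DF x1) (y1 - x1) + blinfun_apply (DF y1) (x1 - y1) = - (v \<bullet> (y1 - x1))"
  proof -
    have "blinfun_apply (DF y1) (x1 - y1) = - blinfun_apply (DF y1) (y1 - x1)"
      by (metis blinfun.minus_right minus_diff_eq)
    then show ?thesis using v[of "y1 - x1"] by (simp add: blinfun.diff_left)
  qed
  then have "(norm v)^2 / L' \<le> v \<bullet> (y1 - x1)" using h1 h2 by simp
  then show ?thesis using L'pos by (simp add: L'_def[symmetric] divide_le_eq mult.commute)
qed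




lemma above_tangent_inner:
  fixes F :: "'a::real_inner \<Rightarrow> real"
  assumes cvx: "convex_on S F" and S: "convex S" and p: "p \<in> S" and w: "w \<in> S"
    and der: "(F has_derivative (\<lambda>h. g \<bullet> h)) (at p)"
  shows "F p + g \<bullet> (w - p) \<le> F w"
proof -
  have e: "(\<lambda>h. g \<bullet> h) = blinfun_apply (blinfun_inner_left g)" by (auto simp: inner_commute)
  show ?thesis using above_tangent[OF cvx S p w, of "blinfun_inner_left g"] der unfolding e by (simp add: inner_commute)
qed

primrec Bseq :: "real^'n^'n \<Rightarrow> (nat \<Rightarrow> real^'n) \<Rightarrow> (nat \<Rightarrow> real^'n) \<Rightarrow> nat \<Rightarrow> real^'n^'n" where
  "Bseq B0 s y 0 = B0"
| "Bseq B0 s y (Suc k) = (let a = Bseq B0 s y k *v s k in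
     Bseq B0 s y k - (1 / (s k \<bullet> a)) *\<^sub>R outer a a + (1 / (y k \<bullet> s k)) *\<^sub>R outer (y k) (y k))"

lemma left_inv_unique:
  fixes H X Y :: "real^'n^'n"
  assumes "X ** H = mat 1" "Y ** H = mat 1" shows "X = Y"
proof -
  have "H ** Y = mat 1" using assms(2) matrix_left_right_inverse by blast
  then have "X = X ** (H ** Y)" by simp
  also have "\<dots> = Y" using assms(1) by (metis matrix_mul_assoc matrix_mul_lid)
  finally show ?thesis .
qed

lemma pd_left_inverse:
  fixes H :: "real^'n^'n"
  assumes pd: "pos_def_mat H"
  obtains B where "B ** H = mat 1" "transpose B = B"
proof -
  have "inj ((*v) H)"
  proof (rule injI)
    fix z w assume "H *v z = H *v w"
    then have "H *v (z - w) = 0" by (simp add: matrix_vector_mult_diff_distrib)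
    then have "(z - w) \<bullet> (H *v (z - w)) = 0" by simp
    then show "z = w" using pd unfolding pos_def_mat_def by (metis eq_iff_diff_eq_0 less_irrefl)
  qed
  then obtain B where B: "B ** H = mat 1" using matrix_left_invertible_injective by blast
  have Hs: "transpose H = H" using pd by (simp add: pos_def_mat_def)
  have "H ** B = mat 1" using B matrix_left_right_inverse by blast
  then have "transpose (H ** B) = mat 1" by simp
  then have "transpose B ** H = mat 1" by (simp add: matrix_transpose_mul Hs)
  then have "transpose B = B" using left_inv_unique B by blast
  then show ?thesis using that B by blast
qed

lemma B_pd:
  fixes H B :: "real^'n^'n"
  assumes pd: "pos_def_mat H" and BH: "B ** H = mat 1"
  shows "z \<bullet> (B *v z) \<ge> 0" and "trace B > 0" and "det B \<noteq> 0"
proof -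
  have Hs: "transpose H = H" using pd by (simp add: pos_def_mat_def)
  have HB: "H ** B = mat 1" using BH matrix_left_right_inverse by blast
  have pos: "z \<bullet> (B *v z) > 0" if "z \<noteq> 0" for z
  proof -
    define w where "w = B *v z"
    have Hw: "H *v w = z" by (simp add: w_def matrix_vector_mul_assoc HB)
    have w0: "w \<noteq> 0" using Hw that by auto
    have "z \<bullet> (B *v z) = (H *v w) \<bullet> w" unfolding Hw by (simp add: w_def)
    also have "\<dots> = w \<bullet> (H *v w)" using sym_inner[OF Hs, of w w] by simp
    finally show ?thesis using pd w0 by (simp add: pos_def_mat_def)
  qed
  show "z \<bullet> (B *v z) \<ge> 0" using pos[of z] by (cases "z = 0") auto
  have "B$i$i > 0" for i using pos[of "axis i 1"] entry_inner[of i B i] by (simp add: axis_eq_0_iff)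
  then show "trace B > 0" unfolding trace_def by (intro sum_pos) auto
  have "det B * det H = 1" using det_mul[of B H] BH by simp
  then show "det B \<noteq> 0" by auto
qed




theorem theorem4p3:
  fixes U V :: "(real^'n) set" and f :: "real^'n \<Rightarrow> real" and x :: "nat \<Rightarrow> real^'n"
  assumes "open U" and "convex U" and "convex_on U f"
    and "bfgs_seq f x" and "\<forall>k. x k \<in> U"
    and "bounded {z \<in> U. f z \<le> f (x 0)}"
    and "open V" and "V \<subseteq> U" and "closure (range x) \<subseteq> V"
    and "Inf (f ` V) = Inf (f ` U)"
    and "\<forall>\<delta>>0. \<exists>U\<delta> (f\<delta> :: real^'n \<Rightarrow> real).
           convex U\<delta> \<and> open U\<delta> \<and> U\<delta> \<subseteq> U \<and> {z \<in> U. f z \<le> f (x 0)} \<subseteq> U\<delta> \<and>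
           C2_on U\<delta> f\<delta> \<and> convex_on U\<delta> f\<delta> \<and>
           (\<forall>z\<in>U\<delta>. (- V = {} \<or> infdist z (- V) > \<delta>) \<longrightarrow> f\<delta> z = f z)"
  shows "(\<lambda>k. f (x k)) \<longlonglongrightarrow> Inf (f ` U)"
proof -
  note Uo = assms(1) and Uc = assms(2) and fc = assms(3) and xU = assms(5) and Lb = assms(6)
    and Vo = assms(7) and VU = assms(8) and clV = assms(9) and ext = assms(11)
  define Lv where "Lv = {z \<in> U. f z \<le> f (x 0)}"
  obtain g \<mu> \<nu> H0 where
    gall: "\<forall>k. (f has_derivative (\<lambda>h. g k \<bullet> h)) (at (x k)) \<and> g k \<noteq> 0"
    and \<mu>0: "0 < \<mu>" and \<mu>\<nu>: "\<mu> < \<nu>" and \<nu>1: "\<nu> < 1" and H0: "pos_def_mat H0"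
    and stp: "\<forall>k. let s = x (Suc k) - x k in
            (\<exists>t::real. t \<ge> 0 \<and> bfgs_H x g H0 k *v g k = - (t *\<^sub>R s)) \<and>
            f (x (Suc k)) \<le> f (x k) + \<mu> * (g k \<bullet> s) \<and>
            g (Suc k) \<bullet> s \<ge> \<nu> * (g k \<bullet> s)"
    using assms(4) unfolding bfgs_seq_def by blast
  have gder: "\<And>k. (f has_derivative (\<lambda>h. g k \<bullet> h)) (at (x k))" and g0: "\<And>k. g k \<noteq> 0"
    using gall by auto
  define s where "s k = x (Suc k) - x k" for k
  define y where "y k = g (Suc k) - g k" for k
  define Hk where "Hk k = bfgs_H x g H0 k" for k
  have stp': "(\<exists>t::real. t \<ge> 0 \<and> Hk k *v g k = - (t *\<^sub>R s k)) \<and>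
            f (x (Suc k)) \<le> f (x k) + \<mu> * (g k \<bullet> s k) \<and> g (Suc k) \<bullet> s k \<ge> \<nu> * (g k \<bullet> s k)" for k
    using stp[rule_format, of k] by (simp add: Let_def s_def Hk_def)
  have HkS: "Hk (Suc k) = (mat 1 - (1 / (s k \<bullet> y k)) *\<^sub>R outer (s k) (y k)) ** Hk k **
      transpose (mat 1 - (1 / (s k \<bullet> y k)) *\<^sub>R outer (s k) (y k)) + (1 / (s k \<bullet> y k)) *\<^sub>R outer (s k) (s k)" for k
    by (simp add: Hk_def s_def y_def Let_def)
  obtain B0 where B0: "B0 ** H0 = mat 1" "transpose B0 = B0" using pd_left_inverse[OF H0] by blast
  define Bk where "Bk = Bseq B0 s y"
  define a where "a k = Bk k *v s k" for k
  have BkS: "Bk (Suc k) = Bk k - (1 / (s k \<bullet> a k)) *\<^sub>R outer (a k) (a k) + (1 / (y k \<bullet> s k)) *\<^sub>R outer (y k) (y k)" for k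
    by (simp add: Bk_def a_def Let_def)
  define Inv where "Inv k \<longleftrightarrow> pos_def_mat (Hk k) \<and> transpose (Bk k) = Bk k \<and> Bk k ** Hk k = mat 1" for k
  have loc: "g k \<bullet> s k < 0 \<and> s k \<bullet> y k \<ge> (1 - \<nu>) * (- (g k \<bullet> s k)) \<and> (\<exists>t>0. a k = (- 1 / t) *\<^sub>R g k)"
    if I: "Inv k" for k
  proof -
    from stp'[of k] obtain t where t0: "t \<ge> 0" and Hg: "Hk k *v g k = - (t *\<^sub>R s k)"
      and wolfe: "g (Suc k) \<bullet> s k \<ge> \<nu> * (g k \<bullet> s k)" by blast
    have pd: "pos_def_mat (Hk k)" and BH: "Bk k ** Hk k = mat 1" using I by (auto simp: Inv_def)
    have "g k \<bullet> (Hk k *v g k) > 0" using pd g0[of k] by (simp add: pos_def_mat_def)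
    then have pos: "- t * (g k \<bullet> s k) > 0" unfolding Hg by simp
    then have tpos: "t > 0" using t0 by (cases "t = 0") auto
    have gs: "g k \<bullet> s k < 0" using pos tpos by (simp add: mult_less_0_iff)
    have Hg': "Hk k *v g k = (- t) *\<^sub>R s k" using Hg by simp
    have "Bk k *v (Hk k *v g k) = g k" by (simp add: matrix_vector_mul_assoc BH)
    moreover have "Bk k *v ((- t) *\<^sub>R s k) = (- t) *\<^sub>R a k" unfolding a_def by (rule matrix_vector_mult_scaleR)
    ultimately have "(- t) *\<^sub>R a k = g k" unfolding Hg' by simp
    then have "(- 1 / t) *\<^sub>R g k = (- 1 / t) *\<^sub>R ((- t) *\<^sub>R a k)" by simp
    then have ak: "a k = (- 1 / t) *\<^sub>R g k" using tpos by simp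
    have "y k \<bullet> s k = g (Suc k) \<bullet> s k - g k \<bullet> s k" by (simp add: y_def inner_diff_left)
    then have "s k \<bullet> y k \<ge> (1 - \<nu>) * (- (g k \<bullet> s k))" using wolfe by (simp add: inner_commute algebra_simps)
    then show ?thesis using gs ak tpos by blast
  qed
  have inv: "Inv k" for k
  proof (induction k)
    case 0 then show ?case using H0 B0 by (simp add: Inv_def Hk_def Bk_def)
  next
    case (Suc k)
    have I: "pos_def_mat (Hk k)" "transpose (Bk k) = Bk k" "Bk k ** Hk k = mat 1" using Suc by (auto simp: Inv_def)
    have sy: "s k \<bullet> y k > 0"
    proof -
      have "- (g k \<bullet> s k) > 0" using loc[OF Suc] by simp
      then have "(1 - \<nu>) * (- (g k \<bullet> s k)) > 0" using \<nu>1 by (intro mult_pos_pos) auto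
      then show ?thesis using loc[OF Suc] by linarith
    qed
    note st = bfgs_step[OF I sy refl refl a_def[of k] BkS[of k]]
    show ?case unfolding Inv_def HkS using st(2) st(3) st(4) by blast
  qed
  have pdk: "pos_def_mat (Hk k)" "transpose (Bk k) = Bk k" "Bk k ** Hk k = mat 1" for k
    using inv[of k] by (auto simp: Inv_def)
  have gs: "g k \<bullet> s k < 0" for k using loc[OF inv[of k]] by blast
  have syk: "s k \<bullet> y k \<ge> (1 - \<nu>) * (- (g k \<bullet> s k))" for k using loc[OF inv[of k]] by blast
  have sypos: "s k \<bullet> y k > 0" for k
  proof -
    have "- (g k \<bullet> s k) > 0" using gs[of k] by simp
    then have "(1 - \<nu>) * (- (g k \<bullet> s k)) > 0" using \<nu>1 by (intro mult_pos_pos) auto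
    then show ?thesis using syk[of k] by linarith
  qed
  have sa: "s k \<bullet> a k > 0" for k
    using bfgs_step(1)[OF pdk(1)[of k] pdk(2)[of k] pdk(3)[of k] sypos[of k] refl refl a_def[of k] BkS[of k]] .
  have trS: "trace (Bk (Suc k)) = trace (Bk k) - (a k \<bullet> a k) / (s k \<bullet> a k) + (y k \<bullet> y k) / (y k \<bullet> s k)" for k
    using bfgs_step(5)[OF pdk(1)[of k] pdk(2)[of k] pdk(3)[of k] sypos[of k] refl refl a_def[of k] BkS[of k]] .
  have detS: "det (Bk (Suc k)) = det (Bk k) * ((y k \<bullet> s k) / (s k \<bullet> a k))" for k
    using bfgs_step(6)[OF pdk(1)[of k] pdk(2)[of k] pdk(3)[of k] sypos[of k] refl refl a_def[of k] BkS[of k]] .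
  define q where "q k = (a k \<bullet> a k) / (s k \<bullet> a k)" for k
  define \<rho> where "\<rho> k = (y k \<bullet> s k) / (s k \<bullet> a k)" for k
  define d where "d k = f (x k) - f (x (Suc k))" for k
  define r where "r k = (y k \<bullet> y k) / (y k \<bullet> s k)" for k
  define T where "T k = trace (Bk k)" for k
  define \<Delta> where "\<Delta> k = det (Bk k)" for k
  have dge: "d k \<ge> \<mu> * (- (g k \<bullet> s k))" for k using stp'[of k] by (simp add: d_def)
  have dpos: "d k > 0" for k
  proof -
    have "\<mu> * (- (g k \<bullet> s k)) > 0" using gs[of k] \<mu>0 by (intro mult_pos_pos) auto
    then show ?thesis using dge[of k] by linarith
  qed
  have ypos: "y k \<bullet> s k > 0" for k using sypos[of k] by (simp add: inner_commute)
  have \<rho>pos: "\<rho> k > 0" for k using ypos[of k] sa[of k] by (simp add: \<rho>_def)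
  have qpos: "q k > 0" for k
  proof -
    obtain t where t: "t > 0" "a k = (- 1 / t) *\<^sub>R g k" using loc[OF inv[of k]] by blast
    then have "a k \<noteq> 0" using g0[of k] by simp
    then show ?thesis using sa[of k] by (simp add: q_def)
  qed
  have keyc: "\<rho> k * q k * d k \<ge> (1 - \<nu>) * \<mu> * (g k \<bullet> g k)" for k
  proof -
    obtain t where t: "t > 0" "a k = (- 1 / t) *\<^sub>R g k" using loc[OF inv[of k]] by blast
    define G where "G = - (g k \<bullet> s k)"
    have G0: "G > 0" using gs[of k] by (simp add: G_def)
    have sak: "s k \<bullet> a k = G / t" using t by (simp add: G_def inner_commute)
    have aak: "a k \<bullet> a k = (g k \<bullet> g k) / t^2" using t by (simp add: power2_eq_square)
    have eq: "\<rho> k * q k * d k = ((y k \<bullet> s k) * d k) * (g k \<bullet> g k) / G^2"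
      using t(1) G0 by (simp add: \<rho>_def q_def sak aak field_simps power2_eq_square)
    have "(y k \<bullet> s k) * d k \<ge> ((1 - \<nu>) * G) * (\<mu> * G)"
      using syk[of k] dge[of k] \<nu>1 \<mu>0 G0 sypos[of k]
      by (intro mult_mono) (auto simp: G_def inner_commute mult_nonneg_nonpos)
    then have "((y k \<bullet> s k) * d k) * (g k \<bullet> g k) / G^2 \<ge> ((1 - \<nu>) * G) * (\<mu> * G) * (g k \<bullet> g k) / G^2"
      by (intro divide_right_mono mult_right_mono) auto
    also have "((1 - \<nu>) * G) * (\<mu> * G) * (g k \<bullet> g k) / G^2 = (1 - \<nu>) * \<mu> * (g k \<bullet> g k)"
      using G0 by (simp add: power2_eq_square field_simps)
    finally show ?thesis unfolding eq .
  qed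
  have Trec: "T (Suc k) = T k - q k + r k" for k using trS[of k] by (simp add: T_def q_def r_def)
  have \<Delta>rec: "\<Delta> (Suc k) = \<Delta> k * \<rho> k" for k using detS[of k] by (simp add: \<Delta>_def \<rho>_def)
  have Tpos: "T k > 0" for k using B_pd(2)[OF pdk(1) pdk(3)] by (simp add: T_def)
  have \<Delta>0: "\<Delta> k \<noteq> 0" for k using B_pd(3)[OF pdk(1) pdk(3)] by (simp add: \<Delta>_def)
  define N where "N = real (card {p. p permutes (UNIV::'n set)})"
  have N0: "N > 0"
  proof -
    have "id \<in> {p. p permutes (UNIV::'n set)}" by (simp add: permutes_id)
    moreover have "finite {p. p permutes (UNIV::'n set)}" by (simp add: finite_permutations)
    ultimately show ?thesis unfolding N_def by (auto simp: card_gt_0_iff intro: permutes_id)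
  qed
  have \<Delta>b: "\<bar>\<Delta> k\<bar> \<le> N * T k ^ CARD('n)" for k
    unfolding \<Delta>_def T_def N_def using psd_det_bound[OF pdk(2)] B_pd(1)[OF pdk(1) pdk(3)] by blast
  have dec: "f (x (Suc k)) \<le> f (x k)" for k using dpos[of k] by (simp add: d_def)
  have decs: "decseq (\<lambda>k. f (x k))" by (rule decseq_SucI) (rule dec)
  have xL: "x k \<in> Lv" for k using xU decseqD[OF decs, of 0 k] by (simp add: Lv_def)
  have LbL: "bounded Lv" using Lb by (simp add: Lv_def)
  obtain R where R: "\<And>z. z \<in> Lv \<Longrightarrow> norm z \<le> R" using LbL unfolding bounded_iff by blast
  have R0: "R \<ge> 0" using R[OF xL[of 0]] norm_ge_zero[of "x 0"] by linarith
  define A where "A = closure (range x)"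
  have rL: "range x \<subseteq> Lv" using xL by auto
  have Acomp: "compact A" unfolding A_def compact_closure using bounded_subset[OF LbL rL] .
  have AV: "A \<subseteq> V" using clV by (simp add: A_def)
  have AU: "A \<subseteq> U" using AV VU by auto
  have contf: "continuous_on U f" by (rule convex_on_continuous[OF Uo fc])
  have AL: "A \<subseteq> Lv"
  proof -
    have "f ` closure (range x) \<subseteq> {..f (x 0)}"
      by (rule image_closure_subset[OF continuous_on_subset[OF contf AU[unfolded A_def]] closed_atMost])
         (use xL in \<open>auto simp: Lv_def\<close>)
    then show ?thesis using AU by (auto simp: Lv_def A_def)
  qed
  have Lconv: "convex Lv"
  proof (rule convexI)
    fix z1 z2 :: "real^'n" and u v :: real
    assume z1: "z1 \<in> Lv" and z2: "z2 \<in> Lv" and u: "0 \<le> u" and v: "0 \<le> v" and uv: "u + v = 1"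
    have "u = 1 - v" using uv by simp
    then have e: "u *\<^sub>R z1 + v *\<^sub>R z2 = (1 - v) *\<^sub>R z1 + v *\<^sub>R z2" by simp
    have inU: "u *\<^sub>R z1 + v *\<^sub>R z2 \<in> U" using convexD[OF Uc, of z1 z2 u v] z1 z2 u v uv by (simp add: Lv_def)
    have "f ((1 - v) *\<^sub>R z1 + v *\<^sub>R z2) \<le> (1 - v) * f z1 + v * f z2"
      using convex_onD[OF fc, of v z1 z2] z1 z2 u v uv by (simp add: Lv_def)
    also have "\<dots> \<le> (1 - v) * f (x 0) + v * f (x 0)"
      using z1 z2 u v uv by (intro add_mono mult_left_mono) (auto simp: Lv_def)
    also have "\<dots> = f (x 0)" by (simp add: algebra_simps)
    finally have "f ((1 - v) *\<^sub>R z1 + v *\<^sub>R z2) \<le> f (x 0)" .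
    then show "u *\<^sub>R z1 + v *\<^sub>R z2 \<in> Lv" using inU unfolding e by (simp add: Lv_def)
  qed
  obtain \<delta> where \<delta>0: "\<delta> > 0" and \<delta>A: "\<And>a. a \<in> A \<Longrightarrow> - V = {} \<or> infdist a (- V) > \<delta>"
  proof (cases "- V = {}")
    case True then show ?thesis using that[of 1] by auto
  next
    case False
    obtain e where e: "e > 0" "\<forall>a\<in>A. \<forall>b\<in>- V. e \<le> dist a b"
      using separate_compact_closed[OF Acomp, of "- V"] Vo AV by auto
    have ie: "infdist a (- V) \<ge> e" if "a \<in> A" for a
      unfolding infdist_notempty[OF False] by (rule cINF_greatest[OF False]) (use e that in auto)
    show ?thesis by (rule that[of "e / 2"]) (use e ie in force)+
  qed
  obtain U\<delta> f\<delta> where U\<delta>c: "convex U\<delta>" and U\<delta>o: "open U\<delta>" and LU\<delta>: "Lv \<subseteq> U\<delta>"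
    and C2: "C2_on U\<delta> f\<delta>" and f\<delta>c: "convex_on U\<delta> f\<delta>"
    and agree: "\<forall>z\<in>U\<delta>. (- V = {} \<or> infdist z (- V) > \<delta>) \<longrightarrow> f\<delta> z = f z"
    using ext[rule_format, OF \<delta>0] unfolding Lv_def by blast
  obtain D D2 where Dder: "\<And>z. z \<in> U\<delta> \<Longrightarrow> (f\<delta> has_derivative blinfun_apply (D z)) (at z)"
    and D2der: "\<And>z. z \<in> U\<delta> \<Longrightarrow> (D has_derivative blinfun_apply (D2 z)) (at z)"
    and D2c: "continuous_on U\<delta> D2"
    using C2 unfolding C2_on_def by blast
  define W where "W = U\<delta> \<inter> {z. - V = {} \<or> \<delta> < infdist z (- V)}"
  have Wo: "open W"
  proof (cases "- V = {}")
    case True then show ?thesis using U\<delta>o by (simp add: W_def)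
  next
    case False
    have "open {z. (\<lambda>z. \<delta>) z < (\<lambda>z. infdist z (- V)) z}"
      by (rule open_Collect_less) (auto intro: continuous_intros)
    then show ?thesis using U\<delta>o False by (simp add: W_def open_Int)
  qed
  have xA: "x k \<in> A" for k unfolding A_def by (rule closure_subset[THEN subsetD]) auto
  have xW: "x k \<in> W" for k using xA[of k] \<delta>A[of "x k"] xL[of k] LU\<delta> by (auto simp: W_def)
  have f\<delta>der: "(f\<delta> has_derivative (\<lambda>h. g k \<bullet> h)) (at (x k))" for k
    by (rule has_derivative_transform_within_open[OF gder Wo xW]) (use agree in \<open>auto simp: W_def\<close>)
  have xU\<delta>: "x k \<in> U\<delta>" for k using xL[of k] LU\<delta> by auto
  have Dx: "blinfun_apply (D (x k)) = (\<lambda>h. g k \<bullet> h)" for k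
    by (rule has_derivative_unique[OF Dder[OF xU\<delta>] f\<delta>der])
  define K where "K = convex hull A"
  have Kcomp: "compact K" by (simp add: K_def compact_convex_hull Acomp)
  have Kconv: "convex K" by (simp add: K_def)
  have AK: "A \<subseteq> K" by (simp add: K_def hull_subset)
  have KL: "K \<subseteq> Lv" unfolding K_def by (rule hull_minimal[where S=convex, OF AL Lconv])
  have KU: "K \<subseteq> U\<delta>" using KL LU\<delta> by auto
  obtain rr where rr0: "rr > 0" and rrU: "\<And>k e. k \<in> K \<Longrightarrow> norm e \<le> rr \<Longrightarrow> k + e \<in> U\<delta>"
  proof (cases "U\<delta> = UNIV")
    case True then show ?thesis using that[of 1] by auto
  next
    case False
    obtain e where e: "e > 0" "\<forall>a\<in>K. \<forall>b\<in>- U\<delta>. e \<le> dist a b"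
      using separate_compact_closed[OF Kcomp, of "- U\<delta>"] U\<delta>o KU by auto
    show ?thesis
    proof (rule that[of "e / 2"])
      fix k ee :: "real^'n" assume k: "k \<in> K" and ee: "norm ee \<le> e / 2"
      show "k + ee \<in> U\<delta>"
      proof (rule ccontr)
        assume "k + ee \<notin> U\<delta>"
        then have "e \<le> dist k (k + ee)" using e k by auto
        then show False using ee e by (simp add: dist_norm)
      qed
    qed (use e in auto)
  qed
  define K' where "K' = (\<Union>k\<in>K. \<Union>e\<in>cball 0 rr. {k + e})"
  have K'conv: "convex K'" unfolding K'_def by (rule convex_sums[OF Kconv convex_cball])
  have K'comp: "compact K'"
  proof -
    have "K' = {k + e | k e. k \<in> K \<and> e \<in> cball 0 rr}" by (auto simp: K'_def) blast
    then show ?thesis using compact_sums[OF Kcomp compact_cball[of 0 rr]] by simp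
  qed
  have K'U: "K' \<subseteq> U\<delta>" using rrU by (auto simp: K'_def)
  have KK': "\<And>k e. k \<in> K \<Longrightarrow> norm e \<le> rr \<Longrightarrow> k + e \<in> K'" unfolding K'_def by force
  obtain B where B: "\<And>z. z \<in> K' \<Longrightarrow> norm (D2 z) \<le> B"
  proof -
    have "compact (D2 ` K')" by (rule compact_continuous_image[OF continuous_on_subset[OF D2c K'U] K'comp])
    then show ?thesis using that compact_imp_bounded bounded_iff by (metis image_eqI)
  qed
  define Lm where "Lm = max B 1"
  have Lm0: "Lm > 0" by (simp add: Lm_def)
  have lip: "norm (D p - D q) \<le> Lm * norm (p - q)" if "p \<in> K'" "q \<in> K'" for p q
  proof (rule differentiable_bound[OF K'conv _ _ that])
    fix z assume z: "z \<in> K'"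
    show "(D has_derivative blinfun_apply (D2 z)) (at z within K')"
      using D2der[of z] z K'U by (auto intro: has_derivative_at_withinI)
    show "onorm (blinfun_apply (D2 z)) \<le> Lm"
      using B[OF z] by (simp add: norm_blinfun.rep_eq[symmetric] Lm_def)
  qed
  obtain RK where RK: "\<And>z. z \<in> K \<Longrightarrow> norm z \<le> RK"
    using compact_imp_bounded[OF Kcomp] unfolding bounded_iff by blast
  have diam: "norm (p - q) \<le> 2 * RK" if "p \<in> K" "q \<in> K" for p q
    using norm_triangle_ineq4[of p q] RK[OF that(1)] RK[OF that(2)] by linarith
  define Lp where "Lp = Lm + Lm * (2 * RK) / rr"
  have coco: "(norm (y k))^2 \<le> Lp * (y k \<bullet> s k)" for k
  proof -
    have v: "blinfun_apply (D (x (Suc k)) - D (x k)) h = y k \<bullet> h" for h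
      by (simp add: blinfun.diff_left Dx y_def inner_diff_left)
    have "(norm (y k))^2 \<le> (Lm + Lm * (2 * RK) / rr) * (y k \<bullet> (x (Suc k) - x k))"
      by (rule cocoercive[OF U\<delta>c f\<delta>c Dder K'U K'conv lip Lm0 KK' rr0 diam _ _ v])
         (use xA AK in auto)
    then show ?thesis by (simp add: Lp_def s_def)
  qed
  have Lp0: "Lp > 0"
  proof -
    have "(norm (y k))^2 \<ge> 0" for k by simp
    have "y 0 \<bullet> s 0 > 0" by (rule ypos)
    have "0 < Lm" by (rule Lm0)
    have "RK \<ge> 0" using RK[OF AK[THEN subsetD, OF xA[of 0]]] norm_ge_zero[of "x 0"] by linarith
    then show ?thesis using Lm0 rr0 by (simp add: Lp_def add_pos_nonneg)
  qed
  have rM: "r k \<le> Lp" for k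
    using coco[of k] ypos[of k] by (simp add: r_def power2_norm_eq_inner divide_le_eq)
  have xUk: "x k \<in> U" for k using xU by blast
  have xLR: "norm (z - x k) \<le> 2 * R" if "z \<in> Lv" for z k
    using norm_triangle_ineq4[of z "x k"] R[OF that] R[OF xL[of k]] by linarith
  have lower: "f z \<ge> f (x k) - norm (g k) * (2 * R)" if z: "z \<in> U" for z k
  proof (cases "z \<in> Lv")
    case True
    have t: "f (x k) + g k \<bullet> (z - x k) \<le> f z"
      by (rule above_tangent_inner[OF fc Uc xUk z gder])
    have "\<bar>g k \<bullet> (z - x k)\<bar> \<le> norm (g k) * norm (z - x k)" by (rule Cauchy_Schwarz_ineq2)
    also have "\<dots> \<le> norm (g k) * (2 * R)" by (intro mult_left_mono xLR[OF True]) auto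
    finally show ?thesis using t by linarith
  next
    case False
    then have "f z > f (x 0)" using z by (simp add: Lv_def)
    moreover have "f (x k) \<le> f (x 0)" using decseqD[OF decs, of 0 k] by simp
    moreover have "norm (g k) * (2 * R) \<ge> 0" using R0 by simp
    ultimately show ?thesis by linarith
  qed
  define lowb where "lowb = f (x 0) - norm (g 0) * (2 * R)"
  have lowbx: "f (x j) \<ge> lowb" for j using lower[OF xUk[of j], of 0] by (simp add: lowb_def)
  have small: "\<exists>j\<ge>K0. norm (g j) < e" if e0: "e > 0" for e K0
  proof (rule ccontr)
    assume "\<not> (\<exists>j\<ge>K0. norm (g j) < e)"
    then have ge: "\<And>j. j \<ge> K0 \<Longrightarrow> norm (g j) \<ge> e" by force
    define c where "c = (1 - \<nu>) * \<mu> * e^2"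
    have dsum: "(\<Sum>j<m. d (j + K0)) = f (x K0) - f (x (m + K0))" for m
      by (induction m) (simp_all add: d_def)
    show False
    proof (rule final_contra[where q="\<lambda>j. q (j + K0)" and d="\<lambda>j. d (j + K0)" and \<rho>="\<lambda>j. \<rho> (j + K0)"
          and c=c and T="\<lambda>j. T (j + K0)" and r="\<lambda>j. r (j + K0)" and M="Lp" and \<Delta>="\<lambda>j. \<Delta> (j + K0)"
          and N=N and n="CARD('n)" and Dd="f (x K0) - lowb"])
      show "c > 0" using \<nu>1 \<mu>0 e0 by (simp add: c_def)
      fix j
      show "c \<le> \<rho> (j + K0) * q (j + K0) * d (j + K0)"
      proof -
        have "e^2 \<le> (norm (g (j + K0)))^2" using ge[of "j + K0"] e0 by (intro power_mono) auto
        then have "c \<le> (1 - \<nu>) * \<mu> * (g (j + K0) \<bullet> g (j + K0))"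
          using \<nu>1 \<mu>0 by (simp add: c_def power2_norm_eq_inner mult_left_mono)
        then show ?thesis using keyc[of "j + K0"] by linarith
      qed
    next
      fix m
      show "(\<Sum>j<m. d (j + K0)) \<le> f (x K0) - lowb" using dsum[of m] lowbx[of "m + K0"] by linarith
    qed (use qpos dpos \<rho>pos Trec rM Lp0 Tpos \<Delta>b \<Delta>rec \<Delta>0 N0 in auto)
  qed
  have bdd: "bdd_below (f ` U)" by (rule bdd_belowI2[of U "f (x 0) - norm (g 0) * (2 * R)"]) (rule lower)
  have Une: "U \<noteq> {}" using xUk[of 0] by auto
  have Ile: "Inf (f ` U) \<le> f (x k)" for k by (rule cInf_lower[OF imageI[OF xUk] bdd])
  have Ige: "f (x k) - norm (g k) * (2 * R) \<le> Inf (f ` U)" for k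
    by (rule cINF_greatest[OF Une]) (rule lower)
  show ?thesis
  proof (rule LIMSEQ_I)
    fix e :: real assume e0: "e > 0"
    define e' where "e' = e / (2 * R + 1)"
    have e'0: "e' > 0" using e0 R0 by (simp add: e'_def)
    obtain j where gj: "norm (g j) < e'" using small[OF e'0, of 0] by blast
    have "norm (g j) * (2 * R) < e"
    proof -
      have "norm (g j) * (2 * R) \<le> e' * (2 * R)" using gj R0 by (intro mult_right_mono) auto
      also have "\<dots> < e" using e0 R0 by (simp add: e'_def field_simps)
      finally show ?thesis .
    qed
    then have "\<forall>n\<ge>j. norm (f (x n) - Inf (f ` U)) < e"
      using Ile Ige[of j] decseqD[OF decs] by (smt (verit) real_norm_def)
    then show "\<exists>no. \<forall>n\<ge>no. norm (f (x n) - Inf (f ` U)) < e" by blast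
  qed
qed


end
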